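(* For $t \in \{0,1,\dots,T\}$ let \[\varphi(t) := \sum_{s=1}^t \nabla L^s(\mathbf{w}^s)\cdot(\mathbf{w}^s - \mathbf{w}^{s+1}) + 19 m^2\gamma^2\eta (T-t) - 4\gamma\sum_{i=1}^m \ln w_i^{t+1},\] where $\nabla L^s(\mathbf{w}^s) = (\partial_1 L^s(\mathbf{w}^s),\dots,\partial_m L^s(\mathbf{w}^s))$. Fix $\alpha\in(0,1/2)$, $m$, $n$. For all sufficiently large $T$, in every run of Algorithm 1 in which the small gradient assumption holds, $\varphi(t)$ is a decreasing function of $t$.
   Context: Setting. There are $m$ experts and $n$ outcomes; $\Delta^k$ is the probability simplex in $\mathbb{R}^k$. For reports $\mathbf{p}^1,\dots,\mathbf{p}^m\in\Delta^n$ and $\mathbf{w}\in\Delta^m$, the logarithmic pool is $p^*_j(\mathbf{w}) = \frac{\prod_k (p^k_j)^{w_k}}{\sum_{\ell}\prod_k (p^k_\ell)^{w_k}}$. At each time $t\in[T]$, reports $\mathbf{p}^{t,1},\dots,\mathbf{p}^{t,m}$ and an outcome $j_t$ are revealed, with loss $L^t(\mathbf{w}) := -\ln p^*_{j_t}(\mathbf{w})$ and, by convention, $\partial_i L^t(\mathbf{w}) := \sum_{\ell} p^*_\ell(\mathbf{w}) \ln p^{t,i}_\ell - \ln p^{t,i}_{j_t}$. Algorithm 1 (parameter $\alpha \in (0,1/2)$): $R(\mathbf{w}) = -\frac{1}{\alpha}\sum_i w_i^\alpha$, $\eta = \frac{1}{\sqrt{T}\ln T}\cdot\frac{1}{12 m^{(1+\alpha)/2}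 n}$, $\mathbf{w}^1 = (1/m,\dots,1/m)$, $\eta_0=+\infty$. For $t=1,\dots,T$: if $\eta \le \min_i (w_i^t)^\alpha$ set $\eta_t = \min(\eta_{t-1},\eta)$, else $\eta_t = \min(\eta_{t-1}, \min_i w_i^t)$; then $\mathbf{w}^{t+1}\in\Delta^m$ is defined by $-(w_i^{t+1})^{\alpha-1} = -(w_i^t)^{\alpha-1} - \eta_t\partial_i L^t(\mathbf{w}^t) + c$ for all $i$, with $c$ the unique constant making $\sum_i w_i^{t+1}=1$. Let $\gamma := 12 n \ln T$. The small gradient assumption holds for a run if for every $t\in[T]$ and $i\in[m]$: $-\frac{\gamma}{w_i^t} \le \partial_i L^t(\mathbf{w}^t) \le \gamma$. *)

theory Defs
  imports Complex_Main
begin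

text \<open>Experts are indexed by 1..m, outcomes by 1..n, time steps by 1..T.
  A report profile at one time step is P :: nat => nat => real with P i j = p^i_j.\<close>

definition in_simplex :: "nat \<Rightarrow> (nat \<Rightarrow> real) \<Rightarrow> bool" where
  "in_simplex k p \<longleftrightarrow> (\<forall>i\<in>{1..k}. 0 \<le> p i) \<and> (\<Sum>i=1..k. p i) = 1"

definition log_pool :: "nat \<Rightarrow> nat \<Rightarrow> (nat \<Rightarrow> nat \<Rightarrow> real) \<Rightarrow> (nat \<Rightarrow> real) \<Rightarrow> nat \<Rightarrow> real" where
  "log_pool m n P w j =
     (\<Prod>k=1..m. P k j powr w k) / (\<Sum>l=1..n. \<Prod>k=1..m. P k l powr w k)"

definition loss_grad :: "nat \<Rightarrow> nat \<Rightarrow> (nat \<Rightarrow> nat \<Rightarrow> real) \<Rightarrow> nat \<Rightarrow> (nat \<Rightarrow> real) \<Rightarrow> nat \<Rightarrow> real" where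
  "loss_grad m n P j w i = (\<Sum>l=1..n. log_pool m n P w l * ln (P i l)) - ln (P i j)"

definition eta_base :: "real \<Rightarrow> nat \<Rightarrow> nat \<Rightarrow> nat \<Rightarrow> real" where
  "eta_base \<alpha> m n T = 1 / (sqrt (real T) * ln (real T)) * (1 / (12 * real m powr ((1 + \<alpha>) / 2) * real n))"

definition eta_cand :: "real \<Rightarrow> nat \<Rightarrow> nat \<Rightarrow> nat \<Rightarrow> (nat \<Rightarrow> nat \<Rightarrow> real) \<Rightarrow> nat \<Rightarrow> real" where
  "eta_cand \<alpha> m n T w t =
     (if eta_base \<alpha> m n T \<le> Min ((\<lambda>i. w t i powr \<alpha>) ` {1..m})
      then eta_base \<alpha> m n T else Min ((\<lambda>i. w t i) ` {1..m}))"

text \<open>eta_t = min(eta_{t-1}, candidate_t) with eta_0 = +infinity, i.e. the minimum of the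
  candidates at steps 1..t.\<close>
definition eta_run :: "real \<Rightarrow> nat \<Rightarrow> nat \<Rightarrow> nat \<Rightarrow> (nat \<Rightarrow> nat \<Rightarrow> real) \<Rightarrow> nat \<Rightarrow> real" where
  "eta_run \<alpha> m n T w t = Min ((eta_cand \<alpha> m n T w) ` {1..t})"

definition valid_input :: "nat \<Rightarrow> nat \<Rightarrow> nat \<Rightarrow> (nat \<Rightarrow> nat \<Rightarrow> nat \<Rightarrow> real) \<Rightarrow> (nat \<Rightarrow> nat) \<Rightarrow> bool" where
  "valid_input m n T p J \<longleftrightarrow>
     (\<forall>t\<in>{1..T}. J t \<in> {1..n} \<and>
        (\<forall>i\<in>{1..m}. in_simplex n (p t i) \<and> (\<forall>j\<in>{1..n}. 0 < p t i j)))"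

text \<open>A run of Algorithm 1: w t is the weight vector w^t, for t = 1..T+1.\<close>
definition alg1_run :: "real \<Rightarrow> nat \<Rightarrow> nat \<Rightarrow> nat \<Rightarrow> (nat \<Rightarrow> nat \<Rightarrow> nat \<Rightarrow> real) \<Rightarrow> (nat \<Rightarrow> nat)
     \<Rightarrow> (nat \<Rightarrow> nat \<Rightarrow> real) \<Rightarrow> bool" where
  "alg1_run \<alpha> m n T p J w \<longleftrightarrow>
     (\<forall>i\<in>{1..m}. w 1 i = 1 / real m) \<and>
     (\<forall>t\<in>{1..T}.
        in_simplex m (w (t + 1)) \<and> (\<forall>i\<in>{1..m}. 0 < w (t + 1) i) \<and>
        (\<exists>c. \<forall>i\<in>{1..m}.
            - (w (t + 1) i powr (\<alpha> - 1)) =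
            - (w t i powr (\<alpha> - 1)) - eta_run \<alpha> m n T w t * loss_grad m n (p t) (J t) (w t) i + c))"

definition gamma_const :: "nat \<Rightarrow> nat \<Rightarrow> real" where
  "gamma_const n T = 12 * real n * ln (real T)"

definition small_gradient :: "nat \<Rightarrow> nat \<Rightarrow> nat \<Rightarrow> (nat \<Rightarrow> nat \<Rightarrow> nat \<Rightarrow> real) \<Rightarrow> (nat \<Rightarrow> nat)
     \<Rightarrow> (nat \<Rightarrow> nat \<Rightarrow> real) \<Rightarrow> bool" where
  "small_gradient m n T p J w \<longleftrightarrow>
     (\<forall>t\<in>{1..T}. \<forall>i\<in>{1..m}.
        - gamma_const n T / w t i \<le> loss_grad m n (p t) (J t) (w t) i \<and>
        loss_grad m n (p t) (J t) (w t) i \<le> gamma_const n T)"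

definition phi :: "real \<Rightarrow> nat \<Rightarrow> nat \<Rightarrow> nat \<Rightarrow> (nat \<Rightarrow> nat \<Rightarrow> nat \<Rightarrow> real) \<Rightarrow> (nat \<Rightarrow> nat)
     \<Rightarrow> (nat \<Rightarrow> nat \<Rightarrow> real) \<Rightarrow> nat \<Rightarrow> real" where
  "phi \<alpha> m n T p J w t =
     (\<Sum>s=1..t. \<Sum>i=1..m. loss_grad m n (p s) (J s) (w s) i * (w s i - w (s + 1) i))
     + 19 * (real m)\<^sup>2 * (gamma_const n T)\<^sup>2 * eta_base \<alpha> m n T * (real T - real t)
     - 4 * gamma_const n T * (\<Sum>i=1..m. ln (w (t + 1) i))"

end

theory Submission
  imports Defs
begin

lemma bern_neg:
  fixes t p :: real
  assumes "0 < t" "p \<le> 0"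
  shows "1 + p * (t - 1) \<le> t powr p"
proof -
  have "ln t \<le> t - 1" using assms by (simp add: ln_le_minus_one)
  hence "p * (t - 1) \<le> p * ln t" using assms(2) by (simp add: mult_left_mono_neg)
  also have "1 + p * ln t \<le> exp (p * ln t)" by (rule exp_ge_add_one_self)
  finally show ?thesis using assms by (simp add: powr_def)
qed

lemma tangent:
  fixes a x y :: real
  assumes "0<a" "a<1" "0<x" "0<y"
  shows "(1-a)*(x-y) \<le> (y powr (a-1) - x powr (a-1)) * x powr (2-a)"
proof -
  define t where "t = y / x"
  have t: "0 < t" using assms by (simp add: t_def)
  have y: "y = x * t" using assms by (simp add: t_def)
  have "y powr (a-1) = x powr (a-1) * t powr (a-1)" using y assms t by (simp add: powr_mult)
  hence "(y powr (a-1) - x powr (a-1)) * x powr (2-a) = x powr (a-1) * x powr (2-a) * (t powr (a-1) - 1)"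
    by (simp add: algebra_simps)
  also have "x powr (a-1) * x powr (2-a) = x" using assms by (simp add: powr_add[symmetric])
  finally have eq: "(y powr (a-1) - x powr (a-1)) * x powr (2-a) = x * (t powr (a-1) - 1)" .
  have "1 + (a-1)*(t-1) \<le> t powr (a-1)" using bern_neg[of t "a-1"] t assms by simp
  hence "(1-a)*(1-t) \<le> t powr (a-1) - 1" by (simp add: algebra_simps)
  hence "x * ((1-a)*(1-t)) \<le> x * (t powr (a-1) - 1)" using assms by (simp add: mult_left_mono)
  moreover have "(1-a)*(x-y) = x * ((1-a)*(1-t))" using y by (simp add: algebra_simps)
  ultimately show ?thesis unfolding eq by linarith
qed


lemma powr_ratio_up:
  fixes u v p k :: real
  assumes "0<u" "0<v" "p \<le> -1/2" "1 \<le> k" "k*u \<le> v"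
  shows "v powr p \<le> u powr p / sqrt k"
proof -
  have "v powr p \<le> (k*u) powr p" using assms by (intro powr_mono2') auto
  also have "\<dots> = k powr p * u powr p" using assms by (simp add: powr_mult)
  also have "k powr p \<le> k powr (-1/2)" using assms by (intro powr_mono) auto
  hence "k powr p * u powr p \<le> k powr (-1/2) * u powr p" by (simp add: mult_right_mono)
  also have "k powr (-1/2) = 1 / sqrt k" using assms
    by (simp add: powr_minus_divide powr_half_sqrt)
  finally show ?thesis by simp
qed

lemma powr_ratio_down:
  fixes u v p k :: real
  assumes "0<u" "0<v" "p \<le> -1/2" "0 < k" "k \<le> 1" "v \<le> k*u"
  shows "u powr p / sqrt k \<le> v powr p"
proof -
  have "k powr (-1/2) = 1 / sqrt k" using assms
    by (simp add: powr_minus_divide powr_half_sqrt)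
  hence "u powr p / sqrt k = k powr (-1/2) * u powr p" by simp
  also have "k powr (-1/2) \<le> k powr p" using assms by (intro powr_mono') auto
  hence "k powr (-1/2) * u powr p \<le> k powr p * u powr p" by (simp add: mult_right_mono)
  also have "\<dots> = (k*u) powr p" using assms by (simp add: powr_mult)
  also have "\<dots> \<le> v powr p" using assms by (intro powr_mono2') auto
  finally show ?thesis .
qed

lemma cheb:
  fixes f g :: "nat \<Rightarrow> real"
  assumes "finite I" "\<forall>i\<in>I. \<forall>j\<in>I. 0 \<le> (f i - f j)*(g i - g j)"
  shows "(\<Sum>i\<in>I. f i) * (\<Sum>i\<in>I. g i) \<le> real (card I) * (\<Sum>i\<in>I. f i * g i)"
proof -
  have "0 \<le> (\<Sum>i\<in>I. \<Sum>j\<in>I. (f i - f j)*(g i - g j))"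
    using assms by (intro sum_nonneg) auto
  also have "(\<Sum>i\<in>I. \<Sum>j\<in>I. (f i - f j)*(g i - g j))
     = (\<Sum>i\<in>I. \<Sum>j\<in>I. f i * g i + f j * g j - f i * g j - f j * g i)"
    by (intro sum.cong) (auto simp: algebra_simps)
  also have sw: "(\<Sum>i\<in>I. \<Sum>j\<in>I. f j * g i) = (\<Sum>i\<in>I. \<Sum>j\<in>I. f i * g j)"
    by (rule sum.swap)
  have "(\<Sum>i\<in>I. \<Sum>j\<in>I. f i * g i + f j * g j - f i * g j - f j * g i) = 2 * real (card I) * (\<Sum>i\<in>I. f i * g i) - 2 * (\<Sum>i\<in>I. f i) * (\<Sum>i\<in>I. g i)"
    using sw by (simp add: sum.distrib sum_subtractf sum_distrib_left sum_distrib_right algebra_simps)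
  finally show ?thesis by simp
qed


lemma pw_facts:
  fixes u a :: real
  assumes "0 < u" "u \<le> 1" "0 < a" "a < 1"
  shows "u powr (a-1) * u powr (1-a) = 1" "u powr (2-a) = u * u powr (1-a)"
        "u powr (1-a) = u * u powr (-a)" "u powr (1-a) \<le> 1" "u powr (2-a) \<le> u"
        "u powr (1-a) \<le> u powr (-a)"
proof -
  show "u powr (a-1) * u powr (1-a) = 1" using assms by (simp add: powr_add[symmetric])
  show e2: "u powr (2-a) = u * u powr (1-a)"
    using assms powr_add[of u 1 "1-a"] by simp
  show e3: "u powr (1-a) = u * u powr (-a)"
    using assms powr_add[of u 1 "-a"] by simp
  show l1: "u powr (1-a) \<le> 1" using assms by (intro powr_le1) auto
  show "u powr (2-a) \<le> u" using e2 l1 assms by (simp add: mult_left_le)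
  show "u powr (1-a) \<le> u powr (-a)" using e3 assms by (simp add: mult_left_le_one_le)
qed


lemma step_core:
  fixes u v g :: "nat \<Rightarrow> real" and a e \<gamma> c :: real and m :: nat
  assumes a0: "0<a" and a1: "a<1/2" and m1: "1 \<le> m"
  and up: "\<And>i. i\<in>{1..m} \<Longrightarrow> 0 < u i" and vp: "\<And>i. i\<in>{1..m} \<Longrightarrow> 0 < v i"
  and us: "(\<Sum>i=1..m. u i) = 1" and vs: "(\<Sum>i=1..m. v i) = 1"
  and e0: "0 < e" and g0: "0 < \<gamma>"
  and gl: "\<And>i. i\<in>{1..m} \<Longrightarrow> -\<gamma> / u i \<le> g i" and gu: "\<And>i. i\<in>{1..m} \<Longrightarrow> g i \<le> \<gamma>"
  and upd: "\<And>i. i\<in>{1..m} \<Longrightarrow> -(v i powr (a-1)) = -(u i powr (a-1)) - e * g i + c"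
  and S1: "\<And>i. i\<in>{1..m} \<Longrightarrow> e*\<gamma>*u i powr (-a) \<le> 1/500"
  and S2: "e*\<gamma>*(1 + 11/10*m) \<le> 1/200"
  shows "(\<forall>i\<in>{1..m}. v i powr (a-1) \<le> u i powr (a-1) + e*\<gamma>*(1 + 11/10*m))
     \<and> (\<Sum>i=1..m. g i * (u i - v i)) + 4*\<gamma>*((\<Sum>i=1..m. ln (u i)) - (\<Sum>i=1..m. ln (v i)))
        \<le> 19*(real m)^2*\<gamma>^2*e"
proof -
  define I where "I = {1..m::nat}"
  have fI: "finite I" and neI: "I \<noteq> {}" using m1 by (auto simp: I_def)
  have cardI: "card I = m" by (simp add: I_def)
  define d where "d = -c/e"
  define D where "D = 11/10*\<gamma>*m"
  have D0: "0 \<le> D" using g0 by (simp add: D_def)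
  have Y: "v i powr (a-1) = u i powr (a-1) + e*(g i + d)" if "i\<in>I" for i
  proof -
    have "e*d = -c" using e0 by (simp add: d_def)
    thus ?thesis using upd[of i] that by (simp add: I_def algebra_simps)
  qed
  have u1: "u i \<le> 1" if "i\<in>I" for i
  proof -
    have "u i \<le> (\<Sum>j\<in>I. u j)" using that fI up by (intro member_le_sum) (auto simp: I_def less_imp_le)
    thus ?thesis using us by (simp add: I_def)
  qed
  have v1: "v i \<le> 1" if "i\<in>I" for i
  proof -
    have "v i \<le> (\<Sum>j\<in>I. v j)" using that fI vp by (intro member_le_sum) (auto simp: I_def less_imp_le)
    thus ?thesis using vs by (simp add: I_def)
  qed
  have up': "0 < u i" "0 < v i" if "i\<in>I" for i using up vp that by (auto simp: I_def)
  note pw = pw_facts[OF up'(1) u1 a0, of ] 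
  have a1': "a < 1" using a1 by simp
  have gul: "-\<gamma> \<le> g i * u i" if "i\<in>I" for i
  proof -
    have h: "-\<gamma> / u i \<le> g i" using gl that by (simp add: I_def)
    have "(-\<gamma>/u i) * u i \<le> g i * u i" using h up'(1)[OF that] by (intro mult_right_mono) auto
    thus ?thesis using up'(1)[OF that] by simp
  qed
  have upos: "0 < u i powr b" "0 < v i powr b" if "i\<in>I" for i b using up'[OF that] by auto
  have dl: "-\<gamma> \<le> d"
  proof -
    have "(1-a)*(u i - v i) \<le> e*(\<gamma>+d)*u i powr (2-a)" if "i\<in>I" for i
    proof -
      have "(1-a)*(u i - v i) \<le> (v i powr (a-1) - u i powr (a-1)) * u i powr (2-a)"
        using tangent[OF a0 a1' up'[OF that]] .
      also have "\<dots> = e*(g i + d) * u i powr (2-a)" using Y[OF that] by simp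
      also have "\<dots> \<le> e*(\<gamma>+d)*u i powr (2-a)"
        using gu[of i] that e0 by (intro mult_right_mono mult_left_mono) (auto simp: I_def)
      finally show ?thesis .
    qed
    hence "(\<Sum>i\<in>I. (1-a)*(u i - v i)) \<le> (\<Sum>i\<in>I. e*(\<gamma>+d)*u i powr (2-a))"
      by (intro sum_mono) auto
    also have "(\<Sum>i\<in>I. (1-a)*(u i - v i)) = 0"
      using us vs by (simp add: sum_distrib_left[symmetric] sum_subtractf I_def)
    also have "(\<Sum>i\<in>I. e*(\<gamma>+d)*u i powr (2-a)) = e*(\<gamma>+d)*(\<Sum>i\<in>I. u i powr (2-a))"
      by (simp add: sum_distrib_left)
    finally have "0 \<le> e*(\<gamma>+d)*(\<Sum>i\<in>I. u i powr (2-a))" .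
    moreover have "0 < (\<Sum>i\<in>I. u i powr (2-a))"
      using fI neI upos by (intro sum_pos) auto
    ultimately have "0 \<le> \<gamma>+d" using e0 by (simp add: zero_le_mult_iff)
    thus ?thesis by simp
  qed
  define A where "A = (\<Sum>i\<in>I. u i powr (1-a))"
  define S where "S = (\<Sum>i\<in>I. u i powr (2-a))"
  have S0: "0 < S" unfolding S_def using fI neI upos by (intro sum_pos) auto
  have AS: "A \<le> m * S"
  proof -
    have "(\<Sum>i\<in>I. u i powr (1-a)) * (\<Sum>i\<in>I. u i) \<le> real (card I) * (\<Sum>i\<in>I. u i powr (1-a) * u i)"
    proof (rule cheb[OF fI], intro ballI)
      fix i j assume ij: "i\<in>I" "j\<in>I"
      show "0 \<le> (u i powr (1-a) - u j powr (1-a)) * (u i - u j)"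
      proof (cases "u i \<le> u j")
        case True
        hence "u i powr (1-a) \<le> u j powr (1-a)" using up'(1)[OF ij(1)] a1' by (intro powr_mono2) auto
        thus ?thesis using True by (intro mult_nonpos_nonpos) auto
      next
        case False
        hence "u j powr (1-a) \<le> u i powr (1-a)" using up'(1)[OF ij(2)] a1' by (intro powr_mono2) auto
        thus ?thesis using False by (intro mult_nonneg_nonneg) auto
      qed
    qed
    moreover have "(\<Sum>i\<in>I. u i) = 1" using us by (simp add: I_def)
    moreover have "(\<Sum>i\<in>I. u i powr (1-a) * u i) = S" unfolding S_def
      using pw_facts(2)[OF up'(1) u1 a0 a1'] by (intro sum.cong) (auto simp: mult.commute)
    ultimately show ?thesis by (simp add: A_def cardI)
  qed
  have eD: "e*(\<gamma>+D) \<le> 1/200" using S2 by (simp add: D_def algebra_simps)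
  have du: "d \<le> D"
  proof (rule ccontr)
    assume "\<not> d \<le> D"
    hence dD: "D < d" by simp
    define Y' where "Y' i = u i powr (a-1) + e*(g i + D)" for i
    define v' where "v' i = Y' i powr (1/(a-1))" for i
    define C where "C = (101/100::real)^2"
    define c' where "c' = (99/100::real)^2"
    have key: "e*(c'*c'*D*u i powr (2-a) - C*C*\<gamma>*u i powr (1-a)) \<le> (1-a)*(u i - v' i) \<and> v i < v' i"
      if i: "i\<in>I" for i
    proof -
      have ui: "0 < u i" "u i \<le> 1" using up'[OF i] u1[OF i] by auto
      note pf = pw_facts[OF ui a0 a1']
      define r where "r = e*(g i + D)*u i powr (1-a)"
      have Yr: "Y' i = u i powr (a-1) * (1 + r)"
        using pf(1) by (simp add: Y'_def r_def algebra_simps)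
      have rl: "-1/500 \<le> r"
      proof -
        have "e*(g i + D)*u i powr (1-a) = e*(g i*u i)*u i powr (-a) + e*D*u i powr (1-a)"
          using pf(3) by (simp add: algebra_simps)
        moreover have "0 \<le> e*D*u i powr (1-a)" using e0 D0 upos[OF i, of "1-a"] by simp
        ultimately have "e*(g i * u i)* u i powr (-a) \<le> e*(g i + D)*u i powr (1-a)" by simp
        moreover have "e*(-\<gamma>)* u i powr (-a) \<le> e*(g i * u i)* u i powr (-a)"
          using gul[OF i] e0 upos[OF i, of "-a"] by (intro mult_right_mono mult_left_mono) auto
        moreover have "e*\<gamma>*u i powr (-a) \<le> 1/500" using S1 i by (simp add: I_def)
        ultimately show ?thesis unfolding r_def by simp
      qed
      have rh: "r \<le> 1/200"
      proof (cases "0 \<le> g i + D")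
        case True
        have "r \<le> e*(g i + D)*1" unfolding r_def using True e0 pf(4)
          by (intro mult_left_mono) auto
        also have "\<dots> \<le> e*(\<gamma>+D)" using gu[of i] i e0 by (simp add: I_def)
        finally show ?thesis using eD by simp
      next
        case False
        hence "e * (g i + D) \<le> 0" using e0 by (simp add: mult_nonneg_nonpos)
        hence "r \<le> 0" unfolding r_def using upos[OF i, of "1-a"]
          by (simp add: mult_nonpos_nonneg)
        thus ?thesis by simp
      qed
      have ypos: "0 < u i powr (a-1)" using upos(1)[OF i] .
      have Y'pos: "0 < Y' i" using Yr rl ypos by simp
      have v'p: "v' i powr (a-1) = Y' i" unfolding v'_def using Y'pos a1' by (simp add: powr_powr)
      have v'pos: "0 < v' i" unfolding v'_def using Y'pos by simp
      have vv': "v i < v' i"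
      proof (rule ccontr)
        assume "\<not> v i < v' i"
        hence "v i powr (a-1) \<le> v' i powr (a-1)" using v'pos a1' by (intro powr_mono2') auto
        moreover have "Y' i < v i powr (a-1)" using Y[OF i] dD e0 by (simp add: Y'_def)
        ultimately show False using v'p by simp
      qed
      have vC: "v' i \<le> C * u i"
      proof (rule ccontr)
        assume "\<not> v' i \<le> C * u i"
        hence "v' i powr (a-1) \<le> u i powr (a-1) / sqrt C"
          using ui v'pos a1 by (intro powr_ratio_up) (auto simp: C_def)
        moreover have "sqrt C = 101/100" by (simp add: C_def)
        ultimately have "Y' i \<le> u i powr (a-1) * (100/101)" using v'p by simp
        thus False using Yr rl ypos by (simp add: mult_le_cancel_left_pos)
      qed
      have vc: "c' * u i \<le> v' i"
      proof (rule ccontr)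
        assume "\<not> c' * u i \<le> v' i"
        hence "u i powr (a-1) / sqrt c' \<le> v' i powr (a-1)"
          using ui v'pos a1 by (intro powr_ratio_down) (auto simp: c'_def power2_eq_square)
        moreover have "sqrt c' = 99/100" by (simp add: c'_def)
        ultimately have "u i powr (a-1) * (100/99) \<le> Y' i" using v'p by simp
        thus False using Yr rh ypos by (simp add: mult_le_cancel_left_pos)
      qed
      have C1: "v' i powr (2-a) \<le> C*C * u i powr (2-a)"
      proof -
        have "v' i powr (2-a) \<le> (C * u i) powr (2-a)" using vC v'pos a1' by (intro powr_mono2) auto
        also have "\<dots> = C powr (2-a) * u i powr (2-a)" using ui by (simp add: powr_mult C_def)
        also have "C powr (2-a) \<le> C powr 2" by (intro powr_mono) (auto simp: C_def a0 less_imp_le)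
        also have "C powr 2 = C*C" by (simp add: C_def power2_eq_square[symmetric] powr_numeral)
        finally show ?thesis using upos[OF i] by (simp add: mult_right_mono)
      qed
      have c1: "c'*c' * u i powr (2-a) \<le> v' i powr (2-a)"
      proof -
        have "c'*c' = c' powr 2" by (simp add: c'_def power2_eq_square[symmetric] powr_numeral)
        also have "c' powr 2 \<le> c' powr (2-a)" by (intro powr_mono') (auto simp: c'_def a0 less_imp_le power2_eq_square)
        finally have "c'*c' * u i powr (2-a) \<le> c' powr (2-a) * u i powr (2-a)"
          using upos[OF i] by (simp add: mult_right_mono)
        also have "\<dots> = (c' * u i) powr (2-a)" using ui by (simp add: powr_mult c'_def)
        also have "\<dots> \<le> v' i powr (2-a)" using vc ui a1' by (intro powr_mono2) (auto simp: c'_def)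
        finally show ?thesis .
      qed
      have tg: "e*(g i + D) * v' i powr (2-a) \<le> (1-a)*(u i - v' i)"
      proof -
        have "(1-a)*(v' i - u i) \<le> (u i powr (a-1) - v' i powr (a-1)) * v' i powr (2-a)"
          using tangent[OF a0 a1' v'pos ui(1)] .
        also have "u i powr (a-1) - v' i powr (a-1) = - (e*(g i + D))" using v'p by (simp add: Y'_def)
        finally show ?thesis by (simp add: algebra_simps)
      qed
      have gu2: "-\<gamma> * u i powr (1-a) \<le> g i * u i powr (2-a)"
      proof -
        have "-\<gamma> * u i powr (1-a) \<le> (g i * u i) * u i powr (1-a)"
          using gul[OF i] upos[OF i] by (intro mult_right_mono) (auto simp: less_imp_le)
        thus ?thesis using pf(2) by (simp add: algebra_simps)
      qed
      have cC: "c'*c' \<le> C*C" by (simp add: c'_def C_def)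
      have "e*(c'*c'*D*u i powr (2-a) - C*C*\<gamma>*u i powr (1-a)) \<le> e*(g i + D) * v' i powr (2-a)"
      proof (cases "0 \<le> g i + D")
        case True
        have "e*(c'*c'*D*u i powr (2-a) - C*C*\<gamma>*u i powr (1-a))
              \<le> e*(c'*c'*(D*u i powr (2-a) - \<gamma>*u i powr (1-a)))"
        proof -
          have h: "c'*c'*(\<gamma>*u i powr (1-a)) \<le> C*C*(\<gamma>*u i powr (1-a))"
            using cC g0 upos(1)[OF i, of "1-a"] by (intro mult_right_mono) auto
          show ?thesis using e0 h by (intro mult_left_mono) (auto simp: algebra_simps)
        qed
        also have "\<dots> \<le> e*(c'*c'*((g i + D) * u i powr (2-a)))"
          using gu2 e0 by (intro mult_left_mono) (auto simp: algebra_simps c'_def)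
        also have "\<dots> \<le> e*((g i + D) * v' i powr (2-a))"
        proof -
          have "(g i + D) * (c'*c'*u i powr (2-a)) \<le> (g i + D) * v' i powr (2-a)"
            by (rule mult_left_mono[OF c1 True])
          thus ?thesis using e0 by (intro mult_left_mono) (auto simp: algebra_simps)
        qed
        finally show ?thesis by (simp add: algebra_simps)
      next
        case False
        have "e*(c'*c'*D*u i powr (2-a) - C*C*\<gamma>*u i powr (1-a))
              \<le> e*(C*C*(D*u i powr (2-a) - \<gamma>*u i powr (1-a)))"
        proof -
          have h: "c'*c'*(D*u i powr (2-a)) \<le> C*C*(D*u i powr (2-a))"
            using cC D0 upos(1)[OF i, of "2-a"] by (intro mult_right_mono) auto
          show ?thesis using e0 h by (intro mult_left_mono) (auto simp: algebra_simps)
        qed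
        also have "\<dots> \<le> e*(C*C*((g i + D) * u i powr (2-a)))"
          using gu2 e0 by (intro mult_left_mono) (auto simp: algebra_simps C_def)
        also have "\<dots> \<le> e*((g i + D) * v' i powr (2-a))"
        proof -
          have "(g i + D) * (C*C*u i powr (2-a)) \<le> (g i + D) * v' i powr (2-a)"
            using False by (intro mult_left_mono_neg[OF C1]) auto
          thus ?thesis using e0 by (intro mult_left_mono) (auto simp: algebra_simps)
        qed
        finally show ?thesis by (simp add: algebra_simps)
      qed
      with tg vv' show ?thesis by simp
    qed
    have "(\<Sum>i\<in>I. e*(c'*c'*D*u i powr (2-a) - C*C*\<gamma>*u i powr (1-a))) \<le> (\<Sum>i\<in>I. (1-a)*(u i - v' i))"
      using key by (intro sum_mono) auto
    also have "(\<Sum>i\<in>I. e*(c'*c'*D*u i powr (2-a) - C*C*\<gamma>*u i powr (1-a))) = e*(c'*c'*D*S - C*C*\<gamma>*A)"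
      by (simp add: S_def A_def sum_distrib_left sum_subtractf algebra_simps)
    also have "(\<Sum>i\<in>I. (1-a)*(u i - v' i)) = (1-a)*(1 - (\<Sum>i\<in>I. v' i))"
      using us by (simp add: sum_distrib_left[symmetric] sum_subtractf I_def)
    finally have ineq: "e*(c'*c'*D*S - C*C*\<gamma>*A) \<le> (1-a)*(1 - (\<Sum>i\<in>I. v' i))" .
    have "(\<Sum>i\<in>I. v i) < (\<Sum>i\<in>I. v' i)" using key fI neI by (intro sum_strict_mono) auto
    hence "1 < (\<Sum>i\<in>I. v' i)" using vs by (simp add: I_def)
    hence "(1-a)*(1 - (\<Sum>i\<in>I. v' i)) < 0" using a1' by (simp add: mult_pos_neg)
    moreover have "0 \<le> e*(c'*c'*D*S - C*C*\<gamma>*A)"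
    proof -
      have "C*C*\<gamma>*A \<le> C*C*\<gamma>*(m*S)" using AS g0 by (intro mult_left_mono) (auto simp: C_def)
      moreover have "C*C*\<gamma>*(m*S) \<le> c'*c'*D*S" 
      proof -
        have "C*C \<le> c'*c'*(11/10)" by (simp add: C_def c'_def power2_eq_square)
        hence "C*C*(\<gamma>*m*S) \<le> c'*c'*(11/10)*(\<gamma>*m*S)" using g0 S0 by (intro mult_right_mono) auto
        thus ?thesis by (simp add: D_def algebra_simps)
      qed
      ultimately show ?thesis using e0 by simp
    qed
    ultimately show False using ineq by simp
  qed
  have growth: "\<forall>i\<in>{1..m}. v i powr (a-1) \<le> u i powr (a-1) + e*\<gamma>*(1 + 11/10*m)"
  proof
    fix i assume "i\<in>{1..m}"
    hence i: "i \<in> I" by (simp add: I_def)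
    have "e*(g i + d) \<le> e*(\<gamma> + D)" using gu[of i] i du e0 by (intro mult_left_mono) (auto simp: I_def)
    thus "v i powr (a-1) \<le> u i powr (a-1) + e*\<gamma>*(1 + 11/10*m)"
      using Y[OF i] by (simp add: D_def algebra_simps)
  qed
  have per: "(g i + d)*(u i - v i) + 4*\<gamma>*(ln (u i) - ln (v i)) \<le> e/(1-a) * ((\<gamma>+D)^2*u i + 4*\<gamma>*(\<gamma>+D))"
    if i: "i\<in>I" for i
  proof -
    define z where "z = g i + d"
    have ui: "0 < u i" "u i \<le> 1" using up'[OF i] u1[OF i] by auto
    have vi: "0 < v i" using up'[OF i] by auto
    note pf = pw_facts[OF ui a0 a1']
    have ypos: "0 < u i powr (a-1)" using upos(1)[OF i] .
    have Yz: "v i powr (a-1) = u i powr (a-1) + e*z" using Y[OF i] by (simp add: z_def)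
    have inv: "u i powr (1-a) = 1 / u i powr (a-1)" using pf(1) ypos by (simp add: field_simps)
    have ratio: "v i powr (a-1) / u i powr (a-1) = 1 + e*z*u i powr (1-a)"
      using Yz ypos inv by (simp add: field_simps)
    have lnrel: "(1-a)*(ln (u i) - ln (v i)) \<le> e*z*u i powr (1-a)"
    proof -
      have "(1-a)*(ln (u i) - ln (v i)) = ln (v i powr (a-1)) - ln (u i powr (a-1))"
        by (simp add: ln_powr algebra_simps)
      also have "\<dots> = ln (v i powr (a-1) / u i powr (a-1))"
        using ypos upos(2)[OF i] by (simp add: ln_div)
      also have "\<dots> \<le> v i powr (a-1) / u i powr (a-1) - 1"
        using ypos upos(2)[OF i] by (intro ln_le_minus_one) simp
      finally show ?thesis using ratio by simp
    qed
    have zu: "z \<le> \<gamma> + D" using gu[of i] i du by (simp add: z_def I_def)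
    have "(1-a)*(z*(u i - v i) + 4*\<gamma>*(ln (u i) - ln (v i))) \<le> e * ((\<gamma>+D)^2*u i + 4*\<gamma>*(\<gamma>+D))"
    proof (cases "0 \<le> z")
      case True
      have t1: "(1-a)*(u i - v i) \<le> e*z*u i powr (2-a)"
        using tangent[OF a0 a1' ui(1) vi] Yz by simp
      have "(1-a)*(z*(u i - v i)) = z*((1-a)*(u i - v i))" by (simp add: algebra_simps)
      also have "\<dots> \<le> z*(e*z*u i powr (2-a))" using t1 True by (rule mult_left_mono)
      also have "\<dots> = e*(z^2*u i powr (2-a))" by (simp add: power2_eq_square algebra_simps)
      also have "\<dots> \<le> e*((\<gamma>+D)^2*u i)"
      proof -
        have "z^2 \<le> (\<gamma>+D)^2" using True zu by (intro power_mono) auto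
        hence "z^2*u i powr (2-a) \<le> (\<gamma>+D)^2*u i" using pf(5) True
          by (intro mult_mono) auto
        thus ?thesis using e0 by simp
      qed
      finally have A1: "(1-a)*(z*(u i - v i)) \<le> e*((\<gamma>+D)^2*u i)" .
      have "e*z*u i powr (1-a) \<le> e*(\<gamma>+D)"
      proof -
        have "z*u i powr (1-a) \<le> (\<gamma>+D)*1" using True zu pf(4) upos(1)[OF i, of "1-a"]
          by (intro mult_mono) auto
        thus ?thesis using e0 by (simp add: mult.assoc)
      qed
      hence A2: "(1-a)*(4*\<gamma>*(ln (u i) - ln (v i))) \<le> 4*\<gamma>*(e*(\<gamma>+D))"
      proof -
        assume h: "e*z*u i powr (1-a) \<le> e*(\<gamma>+D)"
        have "(1-a)*(4*\<gamma>*(ln (u i) - ln (v i))) = 4*\<gamma>*((1-a)*(ln (u i) - ln (v i)))" by (simp add: algebra_simps)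
        also have "\<dots> \<le> 4*\<gamma>*(e*z*u i powr (1-a))" using lnrel g0 by (intro mult_left_mono) auto
        also have "\<dots> \<le> 4*\<gamma>*(e*(\<gamma>+D))" using h g0 by (intro mult_left_mono) auto
        finally show ?thesis .
      qed
      show ?thesis using A1 A2 by (simp add: algebra_simps)
    next
      case False
      have t2: "e*z*v i powr (2-a) \<le> (1-a)*(u i - v i)"
        using tangent[OF a0 a1' vi ui(1)] Yz by (simp add: algebra_simps)
      have zl: "-2/500 \<le> e*z*u i powr (1-a)"
      proof -
        have "e*z*u i powr (1-a) = e*(g i*u i)*u i powr (-a) + e*d*u i powr (1-a)"
          using pf(3) by (simp add: z_def algebra_simps)
        moreover have "e*(-\<gamma>)*u i powr (-a) \<le> e*(g i*u i)*u i powr (-a)"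
          using gul[OF i] e0 upos[OF i, of "-a"] by (intro mult_right_mono mult_left_mono) auto
        moreover have "e*(-\<gamma>)*u i powr (-a) \<le> e*d*u i powr (1-a)"
        proof -
          have "e*(-\<gamma>)*u i powr (-a) \<le> e*(-\<gamma>)*u i powr (1-a)"
            using pf(6) e0 g0 by (simp add: mult_left_mono_neg)
          also have "\<dots> \<le> e*d*u i powr (1-a)"
            using dl e0 upos(1)[OF i, of "1-a"] by (intro mult_right_mono mult_left_mono) auto
          finally show ?thesis .
        qed
        moreover have "e*\<gamma>*u i powr (-a) \<le> 1/500" using S1 i by (simp add: I_def)
        ultimately show ?thesis by simp
      qed
      have vb: "v i \<le> (11/10)^2 * u i"
      proof (rule ccontr)
        assume "\<not> v i \<le> (11/10)^2 * u i"
        hence "v i powr (a-1) \<le> u i powr (a-1) / sqrt ((11/10)^2)"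
          using ui vi a1 by (intro powr_ratio_up) (auto simp: power2_eq_square)
        hence "v i powr (a-1) \<le> u i powr (a-1) * (10/11)" by simp
        moreover have "v i powr (a-1) = u i powr (a-1) * (1 + e*z*u i powr (1-a))"
          using ratio ypos by (simp add: field_simps)
        ultimately show False using zl ypos by (simp add: mult_le_cancel_left_pos)
      qed
      have v2: "v i powr (2-a) \<le> 2 * u i powr (2-a)"
      proof -
        define k :: real where "k = (11/10)^2"
        have "v i powr (2-a) \<le> (k * u i) powr (2-a)" using vb vi a1' by (intro powr_mono2) (auto simp: k_def)
        also have "\<dots> = k powr (2-a) * u i powr (2-a)" using ui by (simp add: powr_mult k_def)
        also have "k powr (2-a) \<le> k powr 2" by (intro powr_mono) (auto simp: k_def a0 less_imp_le power2_eq_square)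
        also have "k powr 2 \<le> 2" by (simp add: k_def powr_numeral power2_eq_square)
        finally show ?thesis using upos[OF i] by (simp add: mult_right_mono)
      qed
      have zu2: "-2*\<gamma> \<le> z * u i"
      proof -
        have "-\<gamma> \<le> d * u i"
        proof (cases "0 \<le> d")
          case True hence "0 \<le> d * u i" using ui by simp
          thus ?thesis using g0 by simp
        next
          case False
          hence "d \<le> d * u i" using ui by (simp add: mult_le_cancel_left1)
          thus ?thesis using dl by simp
        qed
        thus ?thesis using gul[OF i] by (simp add: z_def algebra_simps)
      qed
      have "(1-a)*(z*(u i - v i)) = z*((1-a)*(u i - v i))" by (simp add: algebra_simps)
      also have "\<dots> \<le> z*(e*z*v i powr (2-a))" using t2 False by (intro mult_left_mono_neg) auto
      also have "\<dots> = e*z^2*v i powr (2-a)" by (simp add: power2_eq_square algebra_simps)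
      also have "\<dots> \<le> e*z^2*(2*u i powr (2-a))" using v2 e0 by (intro mult_left_mono) auto
      finally have B1: "(1-a)*(z*(u i - v i)) \<le> e*z^2*(2*u i powr (2-a))" .
      have B2: "(1-a)*(4*\<gamma>*(ln (u i) - ln (v i))) \<le> 4*\<gamma>*(e*z*u i powr (1-a))"
      proof -
        have "(1-a)*(4*\<gamma>*(ln (u i) - ln (v i))) = 4*\<gamma>*((1-a)*(ln (u i) - ln (v i)))" by (simp add: algebra_simps)
        also have "\<dots> \<le> 4*\<gamma>*(e*z*u i powr (1-a))" using lnrel g0 by (intro mult_left_mono) auto
        finally show ?thesis .
      qed
      have "e*z^2*(2*u i powr (2-a)) + 4*\<gamma>*(e*z*u i powr (1-a)) = (e*z*u i powr (1-a))*(2*(z*u i) + 4*\<gamma>)"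
        using pf(2) by (simp add: power2_eq_square algebra_simps)
      also have "\<dots> \<le> 0"
      proof (rule mult_nonpos_nonneg)
        show "e*z*u i powr (1-a) \<le> 0" using False e0 upos(1)[OF i, of "1-a"]
          by (simp add: mult_nonneg_nonpos mult_nonpos_nonneg less_imp_le)
        show "0 \<le> 2*(z*u i) + 4*\<gamma>" using zu2 by simp
      qed
      finally have "(1-a)*(z*(u i - v i) + 4*\<gamma>*(ln (u i) - ln (v i))) \<le> 0"
        using B1 B2 by (simp add: algebra_simps)
      moreover have "0 \<le> e * ((\<gamma>+D)^2*u i + 4*\<gamma>*(\<gamma>+D))" using e0 ui g0 D0 by simp
      ultimately show ?thesis by linarith
    qed
    thus ?thesis using a1' by (simp add: z_def field_simps)
  qed
  have "(\<Sum>i\<in>I. (g i + d)*(u i - v i) + 4*\<gamma>*(ln (u i) - ln (v i)))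
        \<le> (\<Sum>i\<in>I. e/(1-a) * ((\<gamma>+D)^2*u i + 4*\<gamma>*(\<gamma>+D)))"
    using per by (intro sum_mono) auto
  also have "(\<Sum>i\<in>I. e/(1-a) * ((\<gamma>+D)^2*u i + 4*\<gamma>*(\<gamma>+D)))
       = e/(1-a) * (\<Sum>i\<in>I. (\<gamma>+D)^2*u i + 4*\<gamma>*(\<gamma>+D))"
    by (rule sum_distrib_left[symmetric])
  also have "(\<Sum>i\<in>I. (\<gamma>+D)^2*u i + 4*\<gamma>*(\<gamma>+D)) = (\<gamma>+D)^2 * (\<Sum>i\<in>I. u i) + 4*\<gamma>*(\<gamma>+D)*m"
    by (simp add: sum.distrib sum_distrib_left cardI)
  also have "(\<Sum>i\<in>I. (g i + d)*(u i - v i) + 4*\<gamma>*(ln (u i) - ln (v i)))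
       = (\<Sum>i\<in>I. g i * (u i - v i)) + d*((\<Sum>i\<in>I. u i) - (\<Sum>i\<in>I. v i))
         + 4*\<gamma>*((\<Sum>i\<in>I. ln (u i)) - (\<Sum>i\<in>I. ln (v i)))"
    by (simp add: sum.distrib sum_subtractf sum_distrib_left algebra_simps)
  finally have tot: "(\<Sum>i\<in>I. g i * (u i - v i)) + 4*\<gamma>*((\<Sum>i\<in>I. ln (u i)) - (\<Sum>i\<in>I. ln (v i)))
      \<le> e/(1-a) * ((\<gamma>+D)^2 + 4*\<gamma>*(\<gamma>+D)*m)"
    using us vs by (simp add: I_def)
  have main: "(\<Sum>i\<in>I. g i * (u i - v i)) + 4*\<gamma>*((\<Sum>i\<in>I. ln (u i)) - (\<Sum>i\<in>I. ln (v i)))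
      \<le> 19*(real m)^2*\<gamma>^2*e"
  proof (cases "m = 1")
    case True
    hence "u 1 = 1" "v 1 = 1" using us vs by auto
    thus ?thesis using True g0 e0 by (simp add: I_def)
  next
    case False
    hence m2: "2 \<le> real m" using m1 by simp
    have poly: "(1 + 11/10*real m)^2 + 4*(1 + 11/10*real m)*m \<le> 19/2 * (real m)^2"
    proof -
      have "0 \<le> real m * (389/100*real m - 62/10) - 1"
      proof -
        have "2*(389/100*2 - 62/10) \<le> real m * (389/100*real m - 62/10)"
          using m2 by (intro mult_mono) auto
        thus ?thesis by simp
      qed
      thus ?thesis by (simp add: power2_eq_square algebra_simps)
    qed
    have "(\<gamma>+D)^2 + 4*\<gamma>*(\<gamma>+D)*m = \<gamma>^2 * ((1 + 11/10*real m)^2 + 4*(1 + 11/10*real m)*m)"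
      by (simp add: D_def power2_eq_square algebra_simps)
    also have "\<dots> \<le> \<gamma>^2 * (19/2 * (real m)^2)" using poly by (intro mult_left_mono) auto
    finally have h1: "(\<gamma>+D)^2 + 4*\<gamma>*(\<gamma>+D)*m \<le> \<gamma>^2 * (19/2 * (real m)^2)" .
    have h2: "e/(1-a) \<le> 2*e" using e0 a1 by (simp add: field_simps)
    have "e/(1-a) * ((\<gamma>+D)^2 + 4*\<gamma>*(\<gamma>+D)*m) \<le> 2*e * (\<gamma>^2 * (19/2 * (real m)^2))"
      using h1 h2 e0 a1 g0 D0 by (intro mult_mono) auto
    thus ?thesis using tot by (simp add: algebra_simps)
  qed
  show ?thesis using growth main by (simp add: I_def)
qed


lemma e_eq:
  assumes "2 \<le> T" "1 \<le> m" "1 \<le> n"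
  shows "eta_base a m n T * gamma_const n T = 1 / (sqrt (real T) * real m powr ((1+a)/2))"
proof -
  have "0 < ln (real T)" using assms by simp
  moreover have "0 < sqrt (real T)" using assms by simp
  moreover have "0 < real m powr ((1+a)/2)" using assms by simp
  ultimately show ?thesis using assms by (simp add: eta_base_def gamma_const_def field_simps)
qed

lemma eventually_small:
  fixes a :: real and m n :: nat
  assumes a0: "0<a" and a1: "a<1/2" and m1: "1 \<le> m" and n1: "1 \<le> n"
  shows "\<exists>T0. \<forall>T\<ge>T0. 2 \<le> T \<and> 0 < eta_base a m n T * gamma_const n T
     \<and> eta_base a m n T * gamma_const n T * (1 + 11/10*m) \<le> 1/200
     \<and> (\<forall>x>0. x powr (a-1) \<le> m + T*(eta_base a m n T * gamma_const n T)*(1 + 11/10*m)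
            \<longrightarrow> eta_base a m n T * gamma_const n T * x powr (-a) \<le> 1/500)"
proof -
  define K where "K = 1 + 21/10 * real m"
  define q where "q = a/(1-a)"
  define B where "B = (500*K) powr (1/(1-q))"
  have K1: "1 \<le> K" by (simp add: K_def)
  have q0: "0 < q" "q < 1" using a0 a1 by (auto simp: q_def field_simps)
  have B1: "500*K \<le> B"
  proof -
    have "(500*K) powr 1 \<le> (500*K) powr (1/(1-q))" using q0 K1 by (intro powr_mono) (auto simp: field_simps)
    thus ?thesis using K1 by (simp add: B_def)
  qed
  have BB: "B powr (1-q) = 500*K" using K1 q0 by (simp add: B_def powr_powr)
  define T0 where "T0 = nat \<lceil>B^2\<rceil> + 2"
  show ?thesis
  proof (intro exI allI impI)
    fix T assume T: "T0 \<le> T"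
    have T2: "2 \<le> T" using T by (simp add: T0_def)
    define e where "e = eta_base a m n T * gamma_const n T"
    have ee: "e = 1 / (sqrt (real T) * real m powr ((1+a)/2))" using e_eq[OF T2 m1 n1] by (simp add: e_def)
    have sT: "0 < sqrt (real T)" using T2 by simp
    have mp: "1 \<le> real m powr ((1+a)/2)" using m1 a0 by (intro ge_one_powr_ge_zero) auto
    have pp: "0 < sqrt (real T) * real m powr ((1+a)/2)" using sT mp m1 by (intro mult_pos_pos) auto
    have e0: "0 < e" using ee pp by simp
    have "sqrt (real T) * 1 \<le> sqrt (real T) * real m powr ((1+a)/2)"
      using sT mp by (intro mult_left_mono) auto
    hence e1: "e \<le> 1 / sqrt (real T)" unfolding ee using sT pp
      by (simp add: frac_le)
    have sB: "B \<le> sqrt (real T)"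
    proof -
      have "B^2 \<le> real T" using T by (simp add: T0_def) linarith
      hence "sqrt (B^2) \<le> sqrt (real T)" by (rule real_sqrt_le_mono)
      moreover have "0 \<le> B" using K1 by (simp add: B_def)
      ultimately show ?thesis by simp
    qed
    have S2: "e*(1 + 11/10*m) \<le> 1/200"
    proof -
      have "e*(1 + 11/10*m) \<le> (1 / sqrt (real T))*(1 + 11/10*m)" using e1 by (intro mult_right_mono) auto
      also have "\<dots> = (1 + 11/10*m) / sqrt (real T)" by simp
      also have "\<dots> \<le> (1 + 11/10*m) / (500*K)" using B1 sB K1 sT by (intro divide_left_mono mult_pos_pos) auto
      also have "\<dots> \<le> 1/200" using K1 by (simp add: K_def field_simps)
      finally show ?thesis .
    qed
    have S1: "e * x powr (-a) \<le> 1/500" if x: "0 < x" "x powr (a-1) \<le> m + T*e*(1 + 11/10*m)" for x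
    proof -
      have Te: "T*e \<le> sqrt (real T)"
      proof -
        have "T*e \<le> T / sqrt T" using e1 T2 by (simp add: field_simps mult_left_mono)
        also have "T / sqrt T = sqrt T" using T2 by (simp add: real_div_sqrt)
        finally show ?thesis .
      qed
      have H: "x powr (a-1) \<le> sqrt (real T) * K"
      proof -
        have "T*e*(1 + 11/10*m) \<le> sqrt T * (1 + 11/10*m)" using Te by (intro mult_right_mono) auto
        moreover have "real m \<le> sqrt T * m" using T2 by (simp add: mult_le_cancel_right1)
        ultimately show ?thesis using x by (simp add: K_def algebra_simps)
      qed
      have ex: "(a-1)*q = -a" using a1 by (simp add: q_def field_simps)
      have "x powr (-a) = (x powr (a-1)) powr q" by (simp add: powr_powr ex)
      also have "\<dots> \<le> (sqrt (real T) * K) powr q" using H q0 by (intro powr_mono2) auto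
      also have "\<dots> = sqrt (real T) powr q * K powr q" using K1 sT by (simp add: powr_mult)
      also have "K powr q \<le> K powr 1" using K1 q0 by (intro powr_mono) auto
      finally have xb: "x powr (-a) \<le> sqrt (real T) powr q * K"
        using K1 sT by (simp add: mult_left_mono)
      have "e * x powr (-a) \<le> (1/sqrt (real T)) * (sqrt (real T) powr q * K)"
        using e1 xb e0 by (intro mult_mono) auto
      also have "(1/sqrt (real T)) * (sqrt (real T) powr q * K) = K / sqrt (real T) powr (1-q)"
        using sT by (simp add: powr_diff field_simps)
      also have "\<dots> \<le> K / B powr (1-q)"
        using sB q0 K1 B1 T2 by (intro divide_left_mono powr_mono2 mult_pos_pos) auto
      also have "\<dots> = 1/500" using BB K1 by simp
      finally show ?thesis .
    qed
    show "2 \<le> T \<and> 0 < eta_base a m n T * gamma_const n T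
     \<and> eta_base a m n T * gamma_const n T * (1 + 11/10*m) \<le> 1/200
     \<and> (\<forall>x>0. x powr (a-1) \<le> m + T*(eta_base a m n T * gamma_const n T)*(1 + 11/10*m)
            \<longrightarrow> eta_base a m n T * gamma_const n T * x powr (-a) \<le> 1/500)"
      using T2 e0 S2 S1 by (simp add: e_def)
  qed
qed


theorem lemma3:
  fixes \<alpha> :: real and m n :: nat
  assumes "0 < \<alpha>" and "\<alpha> < 1 / 2" and "1 \<le> m" and "1 \<le> n"
  shows "\<exists>T0. \<forall>T \<ge> T0. \<forall>p J w.
           valid_input m n T p J \<longrightarrow> alg1_run \<alpha> m n T p J w \<longrightarrow> small_gradient m n T p J w \<longrightarrow>
           (\<forall>t1 t2. t1 \<le> t2 \<longrightarrow> t2 \<le> T \<longrightarrow> phi \<alpha> m n T p J w t2 \<le> phi \<alpha> m n T p J w t1)"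
proof -
  note a0 = assms(1) and a1 = assms(2) and m1 = assms(3) and n1 = assms(4)
  obtain T0 where T0: "\<And>T. T0 \<le> T \<Longrightarrow> 2 \<le> T \<and> 0 < eta_base \<alpha> m n T * gamma_const n T
     \<and> eta_base \<alpha> m n T * gamma_const n T * (1 + 11/10*m) \<le> 1/200
     \<and> (\<forall>x>0. x powr (\<alpha>-1) \<le> m + T*(eta_base \<alpha> m n T * gamma_const n T)*(1 + 11/10*m)
            \<longrightarrow> eta_base \<alpha> m n T * gamma_const n T * x powr (-\<alpha>) \<le> 1/500)"
    using eventually_small[OF a0 a1 m1 n1] by blast
  show ?thesis
  proof (intro exI[of _ T0] allI impI)
    fix T p J w and t1 t2 :: nat
    assume T: "T0 \<le> T" and vi: "valid_input m n T p J" and run: "alg1_run \<alpha> m n T p J w"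
      and sg: "small_gradient m n T p J w" and h: "t1 \<le> t2" "t2 \<le> T"
    define \<eta> where "\<eta> = eta_base \<alpha> m n T"
    define \<gamma> where "\<gamma> = gamma_const n T"
    define e where "e = \<eta> * \<gamma>"
    define E where "E = e * (1 + 11/10*m)"
    have T2: "2 \<le> T" and e0: "0 < e" and S2: "E \<le> 1/200"
      and S1: "\<And>x. 0 < x \<Longrightarrow> x powr (\<alpha>-1) \<le> m + T*E \<Longrightarrow> e * x powr (-\<alpha>) \<le> 1/500"
      using T0[OF T] by (auto simp: e_def \<eta>_def \<gamma>_def E_def mult.assoc)
    have g0: "0 < \<gamma>" using T2 n1 by (simp add: \<gamma>_def gamma_const_def)
    have eta0: "0 < \<eta>" using e0 g0 by (simp add: e_def zero_less_mult_iff)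
    have w1: "\<And>i. i\<in>{1..m} \<Longrightarrow> w 1 i = 1 / real m" using run by (simp add: alg1_run_def)
    have runT: "\<And>t. t\<in>{1..T} \<Longrightarrow> in_simplex m (w (t + 1)) \<and> (\<forall>i\<in>{1..m}. 0 < w (t + 1) i) \<and>
        (\<exists>c. \<forall>i\<in>{1..m}.
            - (w (t + 1) i powr (\<alpha> - 1)) =
            - (w t i powr (\<alpha> - 1)) - eta_run \<alpha> m n T w t * loss_grad m n (p t) (J t) (w t) i + c)"
      using run by (simp add: alg1_run_def)
    have wpos: "0 < w t i \<and> (\<Sum>j=1..m. w t j) = 1" if t: "1 \<le> t" "t \<le> T+1" and i: "i\<in>{1..m}" for t i
    proof (cases "t = 1")
      case True
      have "(\<Sum>j=1..m. w t j) = (\<Sum>j=1..m. 1 / real m)" using True w1 by (intro sum.cong) auto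
      also have "\<dots> = 1" using m1 by simp
      finally show ?thesis using True w1[OF i] m1 by simp
    next
      case False
      then obtain s where s: "t = s + 1" "s\<in>{1..T}" using t by (cases t) auto
      from runT[OF s(2)] show ?thesis using i by (simp add: s(1) in_simplex_def)
    qed
    have wle1: "w t i \<le> 1" if t: "1 \<le> t" "t \<le> T+1" and i: "i\<in>{1..m}" for t i
    proof -
      have "w t i \<le> (\<Sum>j\<in>{1..m}. w t j)" using i wpos[OF t] by (intro member_le_sum) (auto simp: less_imp_le)
      thus ?thesis using wpos[OF t i] by simp
    qed
    have cand: "0 < eta_cand \<alpha> m n T w s \<and> eta_cand \<alpha> m n T w s \<le> \<eta>" if s: "1 \<le> s" "s \<le> T" for s
    proof (cases "\<eta> \<le> Min ((\<lambda>i. w s i powr \<alpha>) ` {1..m})")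
      case True
      thus ?thesis using eta0 by (simp add: eta_cand_def \<eta>_def)
    next
      case False
      have s': "1 \<le> s" "s \<le> T+1" using s by auto
      have ne: "(\<lambda>i. w s i) ` {1..m} \<noteq> {}" "(\<lambda>i. w s i powr \<alpha>) ` {1..m} \<noteq> {}" using m1 by auto
      have "Min ((\<lambda>i. w s i powr \<alpha>) ` {1..m}) < \<eta>" using False by simp
      then obtain i where i: "i\<in>{1..m}" "w s i powr \<alpha> < \<eta>" using ne by (auto simp: Min_less_iff)
      have "Min ((\<lambda>i. w s i) ` {1..m}) \<le> w s i" using i by (intro Min_le) auto
      also have "w s i = w s i powr 1" using wpos[OF s' i(1)] by simp
      also have "\<dots> \<le> w s i powr \<alpha>" using wpos[OF s' i(1)] wle1[OF s' i(1)] a1 by (intro powr_mono') auto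
      finally have le: "Min ((\<lambda>i. w s i) ` {1..m}) \<le> \<eta>" using i by simp
      have "0 < Min ((\<lambda>i. w s i) ` {1..m})" using ne wpos[OF s'] by (subst Min_gr_iff) auto
      thus ?thesis using le False by (simp add: eta_cand_def \<eta>_def)
    qed
    have eta: "0 < eta_run \<alpha> m n T w t \<and> eta_run \<alpha> m n T w t \<le> \<eta>" if t: "1 \<le> t" "t \<le> T" for t
    proof
      show "0 < eta_run \<alpha> m n T w t" unfolding eta_run_def using t cand by (subst Min_gr_iff) auto
      have "eta_run \<alpha> m n T w t \<le> eta_cand \<alpha> m n T w t" unfolding eta_run_def using t by (intro Min_le) auto
      thus "eta_run \<alpha> m n T w t \<le> \<eta>" using cand[OF t] by simp
    qed
    have step: "(\<forall>i\<in>{1..m}. w (t+1) i powr (\<alpha>-1) \<le> w t i powr (\<alpha>-1) + E)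
       \<and> (\<Sum>i=1..m. loss_grad m n (p t) (J t) (w t) i * (w t i - w (t+1) i))
          + 4*\<gamma>*((\<Sum>i=1..m. ln (w t i)) - (\<Sum>i=1..m. ln (w (t+1) i))) \<le> 19*(real m)^2*\<gamma>^2*\<eta>"
      if t: "1 \<le> t" "t \<le> T" and inv: "\<forall>i\<in>{1..m}. w t i powr (\<alpha>-1) \<le> m + T*E" for t
    proof -
      define et where "et = eta_run \<alpha> m n T w t"
      have et: "0 < et" "et \<le> \<eta>" using eta[OF t] by (auto simp: et_def)
      have t': "1 \<le> t" "t \<le> T+1" "1 \<le> t+1" "t+1 \<le> T+1" using t by auto
      have tT: "t \<in> {1..T}" using t by simp
      obtain c where c: "\<forall>i\<in>{1..m}. - (w (t + 1) i powr (\<alpha> - 1)) =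
            - (w t i powr (\<alpha> - 1)) - et * loss_grad m n (p t) (J t) (w t) i + c"
        using runT[OF tT] by (auto simp: et_def)
      have sgt: "\<forall>i\<in>{1..m}. - \<gamma> / w t i \<le> loss_grad m n (p t) (J t) (w t) i \<and>
        loss_grad m n (p t) (J t) (w t) i \<le> \<gamma>" using sg tT by (simp add: small_gradient_def \<gamma>_def)
      have etg: "et*\<gamma> \<le> e" using et g0 by (simp add: e_def mult_right_mono)
      have r: "(\<forall>i\<in>{1..m}. w (t+1) i powr (\<alpha>-1) \<le> w t i powr (\<alpha>-1) + et*\<gamma>*(1 + 11/10*m))
         \<and> (\<Sum>i=1..m. loss_grad m n (p t) (J t) (w t) i * (w t i - w (t+1) i))
          + 4*\<gamma>*((\<Sum>i=1..m. ln (w t i)) - (\<Sum>i=1..m. ln (w (t+1) i))) \<le> 19*(real m)^2*\<gamma>^2*et"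
      proof (rule step_core[OF a0 a1 m1])
        show "\<And>i. i\<in>{1..m} \<Longrightarrow> 0 < w t i" using wpos[OF t'(1,2)] by auto
        show "\<And>i. i\<in>{1..m} \<Longrightarrow> 0 < w (t+1) i" using wpos[OF t'(3,4)] by auto
        show "(\<Sum>i=1..m. w t i) = 1" using wpos[OF t'(1,2), of 1] m1 by auto
        show "(\<Sum>i=1..m. w (t+1) i) = 1" using wpos[OF t'(3,4), of 1] m1 by auto
        show "0 < et" "0 < \<gamma>" using et g0 by auto
        show "\<And>i. i\<in>{1..m} \<Longrightarrow> -\<gamma> / w t i \<le> loss_grad m n (p t) (J t) (w t) i" using sgt by auto
        show "\<And>i. i\<in>{1..m} \<Longrightarrow> loss_grad m n (p t) (J t) (w t) i \<le> \<gamma>" using sgt by auto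
        show "\<And>i. i\<in>{1..m} \<Longrightarrow> - (w (t + 1) i powr (\<alpha> - 1)) =
            - (w t i powr (\<alpha> - 1)) - et * loss_grad m n (p t) (J t) (w t) i + c" using c by auto
        show "\<And>i. i\<in>{1..m} \<Longrightarrow> et*\<gamma>*w t i powr (-\<alpha>) \<le> 1/500"
        proof -
          fix i assume i: "i\<in>{1..m}"
          have "et*\<gamma>*w t i powr (-\<alpha>) \<le> e * w t i powr (-\<alpha>)" using etg by (intro mult_right_mono) auto
          also have "\<dots> \<le> 1/500" using S1 wpos[OF t'(1,2) i] inv i by auto
          finally show "et*\<gamma>*w t i powr (-\<alpha>) \<le> 1/500" .
        qed
        show "et*\<gamma>*(1 + 11/10*m) \<le> 1/200"
        proof -
          have "et*\<gamma>*(1 + 11/10*m) \<le> e*(1 + 11/10*m)" using etg by (intro mult_right_mono) auto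
          also have "\<dots> \<le> 1/200" using S2 by (simp add: E_def)
          finally show ?thesis .
        qed
      qed
      have "et*\<gamma>*(1 + 11/10*m) \<le> E" using etg unfolding E_def by (intro mult_right_mono) auto
      moreover have "19*(real m)^2*\<gamma>^2*et \<le> 19*(real m)^2*\<gamma>^2*\<eta>" using et by (intro mult_left_mono) auto
      ultimately show ?thesis using r by fastforce
    qed
    have E0: "0 \<le> E" using e0 by (simp add: E_def)
    have inv: "\<forall>i\<in>{1..m}. w (t+1) i powr (\<alpha>-1) \<le> m + t*E" if "t \<le> T" for t
      using that
    proof (induction t)
      case 0
      show ?case
      proof
        fix i assume i: "i\<in>{1..m}"
        have "w 1 i powr (\<alpha>-1) = (1 / real m) powr (\<alpha>-1)" using w1[OF i] by simp
        also have "\<dots> = 1 / real m powr (\<alpha>-1)" using m1 by (simp add: powr_divide)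
        also have "\<dots> = real m powr (-(\<alpha>-1))" by (rule powr_minus_divide[symmetric])
        also have "\<dots> = real m powr (1-\<alpha>)" by simp
        also have "\<dots> \<le> real m powr 1" using m1 a0 by (intro powr_mono) auto
        finally show "w (0+1) i powr (\<alpha>-1) \<le> m + real 0*E" using m1 by simp
      qed
    next
      case (Suc t)
      hence IH: "\<forall>i\<in>{1..m}. w (t+1) i powr (\<alpha>-1) \<le> m + t*E" by simp
      have tE: "real t * E \<le> T * E" using Suc.prems E0 by (intro mult_right_mono) auto
      have "\<forall>i\<in>{1..m}. w (t+1) i powr (\<alpha>-1) \<le> m + T*E" using IH tE by fastforce
      hence st: "\<forall>i\<in>{1..m}. w (t+1+1) i powr (\<alpha>-1) \<le> w (t+1) i powr (\<alpha>-1) + E"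
        using step[of "t+1"] Suc.prems by auto
      show ?case
      proof
        fix i assume i: "i\<in>{1..m}"
        have "w (Suc t+1) i powr (\<alpha>-1) \<le> w (t+1) i powr (\<alpha>-1) + E" using st i by simp
        also have "\<dots> \<le> m + t*E + E" using IH i by auto
        finally show "w (Suc t+1) i powr (\<alpha>-1) \<le> m + real (Suc t)*E" by (simp add: algebra_simps)
      qed
    qed
    have phis: "phi \<alpha> m n T p J w (Suc t) \<le> phi \<alpha> m n T p J w t" if t: "t < T" for t
    proof -
      have tT: "t \<le> T" using t by simp
      have "\<forall>i\<in>{1..m}. w (t+1) i powr (\<alpha>-1) \<le> m + T*E"
        using inv[OF tT] E0 t by (fastforce intro: order_trans[OF _ add_left_mono[OF mult_right_mono]])
      hence b: "(\<Sum>i=1..m. loss_grad m n (p (t+1)) (J (t+1)) (w (t+1)) i * (w (t+1) i - w (t+1+1) i))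
          + 4*\<gamma>*((\<Sum>i=1..m. ln (w (t+1) i)) - (\<Sum>i=1..m. ln (w (t+1+1) i))) \<le> 19*(real m)^2*\<gamma>^2*\<eta>"
        using step[of "t+1"] t by auto
      have "real T - real (Suc t) = (real T - real t) - 1" by simp
      thus ?thesis using b
        by (simp add: phi_def \<gamma>_def \<eta>_def algebra_simps)
    qed
    show "phi \<alpha> m n T p J w t2 \<le> phi \<alpha> m n T p J w t1"
        using h(1)
      proof (induction rule: dec_induct)
        case base show ?case by simp
      next
        case (step k)
        have "phi \<alpha> m n T p J w (Suc k) \<le> phi \<alpha> m n T p J w k" using step.hyps h(2) by (intro phis) auto
        thus ?case using step.IH by simp
      qed
  qed
qed
end
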